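(* Let $\alpha_1,\alpha_2,\alpha_3\in\mathbb{C}$ and let $\mathbf{x}=(x_s)\in\mathbb{C}^{\mathbb{Z}}$ satisfy, for all $v\in\mathbb{Z}$ (with $z_i=x_{v+i}$), $$z_0^2z_3^2+\alpha_1z_1^2z_2^2+\alpha_2z_0z_1z_2z_3+\alpha_3(z_0z_2^3+z_1^3z_3)=0.$$ Then for all $v\in\mathbb{Z}$, with $z_i=x_{v+i}$, $$(2z_0^2z_3+\alpha_2z_0z_1z_2+\alpha_3z_1^3)^2=(2z_{-1}z_2^2+\alpha_2z_0z_1z_2+\alpha_3z_1^3)^2=D,$$ where $D=\alpha_3^2z_1^6+2\alpha_2\alpha_3z_0z_1^4z_2+(\alpha_2^2-4\alpha_1)z_0^2z_1^2z_2^2-4\alpha_3z_0^3z_2^3$. *)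

theory Defs
  imports Complex_Main
begin

end

theory Submission
  imports Defs
begin

theorem proposition6p1:
  fixes \<alpha>1 \<alpha>2 \<alpha>3 :: complex and x :: "int \<Rightarrow> complex"
  assumes rec: "\<And>v::int. (x v)^2 * (x (v+3))^2 + \<alpha>1 * (x (v+1))^2 * (x (v+2))^2
      + \<alpha>2 * x v * x (v+1) * x (v+2) * x (v+3)
      + \<alpha>3 * (x v * (x (v+2))^3 + (x (v+1))^3 * x (v+3)) = 0"
  shows "\<forall>v::int.
    (2 * (x v)^2 * x (v+3) + \<alpha>2 * x v * x (v+1) * x (v+2) + \<alpha>3 * (x (v+1))^3)^2
      = (2 * x (v-1) * (x (v+2))^2 + \<alpha>2 * x v * x (v+1) * x (v+2) + \<alpha>3 * (x (v+1))^3)^2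
    \<and> (2 * x (v-1) * (x (v+2))^2 + \<alpha>2 * x v * x (v+1) * x (v+2) + \<alpha>3 * (x (v+1))^3)^2
      = \<alpha>3^2 * (x (v+1))^6 + 2 * \<alpha>2 * \<alpha>3 * x v * (x (v+1))^4 * x (v+2)
        + (\<alpha>2^2 - 4 * \<alpha>1) * (x v)^2 * (x (v+1))^2 * (x (v+2))^2
        - 4 * \<alpha>3 * (x v)^3 * (x (v+2))^3"
proof
  fix v :: int
  define a where "a = x (v-1)"
  define b where "b = x v"
  define c where "c = x (v+1)"
  define d where "d = x (v+2)"
  define e where "e = x (v+3)"
  have r1: "b^2 * e^2 + \<alpha>1 * c^2 * d^2 + \<alpha>2 * b * c * d * e + \<alpha>3 * (b * d^3 + c^3 * e) = 0"
    using rec[of v] unfolding b_def c_def d_def e_def by (simp add: add.assoc)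
  have r0: "a^2 * d^2 + \<alpha>1 * b^2 * c^2 + \<alpha>2 * a * b * c * d + \<alpha>3 * (a * c^3 + b^3 * d) = 0"
    using rec[of "v-1"] unfolding a_def b_def c_def d_def by (simp add: algebra_simps)
  define D where "D = \<alpha>3^2 * c^6 + 2 * \<alpha>2 * \<alpha>3 * b * c^4 * d
        + (\<alpha>2^2 - 4 * \<alpha>1) * b^2 * c^2 * d^2 - 4 * \<alpha>3 * b^3 * d^3"
  have i1: "(2 * b^2 * e + \<alpha>2 * b * c * d + \<alpha>3 * c^3)^2 - D
     = 4 * b^2 * (b^2 * e^2 + \<alpha>1 * c^2 * d^2 + \<alpha>2 * b * c * d * e + \<alpha>3 * (b * d^3 + c^3 * e))"
    unfolding D_def by algebra
  have i0: "(2 * a * d^2 + \<alpha>2 * b * c * d + \<alpha>3 * c^3)^2 - D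
     = 4 * d^2 * (a^2 * d^2 + \<alpha>1 * b^2 * c^2 + \<alpha>2 * a * b * c * d + \<alpha>3 * (a * c^3 + b^3 * d))"
    unfolding D_def by algebra
  have e1: "(2 * b^2 * e + \<alpha>2 * b * c * d + \<alpha>3 * c^3)^2 = D" using i1 r1 by simp
  have e0: "(2 * a * d^2 + \<alpha>2 * b * c * d + \<alpha>3 * c^3)^2 = D" using i0 r0 by simp
  show "(2 * (x v)^2 * x (v+3) + \<alpha>2 * x v * x (v+1) * x (v+2) + \<alpha>3 * (x (v+1))^3)^2
      = (2 * x (v-1) * (x (v+2))^2 + \<alpha>2 * x v * x (v+1) * x (v+2) + \<alpha>3 * (x (v+1))^3)^2
    \<and> (2 * x (v-1) * (x (v+2))^2 + \<alpha>2 * x v * x (v+1) * x (v+2) + \<alpha>3 * (x (v+1))^3)^2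
      = \<alpha>3^2 * (x (v+1))^6 + 2 * \<alpha>2 * \<alpha>3 * x v * (x (v+1))^4 * x (v+2)
        + (\<alpha>2^2 - 4 * \<alpha>1) * (x v)^2 * (x (v+1))^2 * (x (v+2))^2
        - 4 * \<alpha>3 * (x v)^3 * (x (v+2))^3"
    using e0 e1 unfolding D_def a_def b_def c_def d_def e_def by simp
qed

end
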